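(* Let $D_1$ and $D_2$ be two different subsets of $MB_Y$, each of which is a set of fair causal features (i.e. a feasible solution of the fair causal feature selection problem described in the context). Then $D_1 \cup D_2$ is again a causally fair solution, i.e. the predictor $Y'$ obtained by training a classifier on $D_1 \cup D_2$ is causally fair with respect to the sensitive variable $S$.
   Context: Setting: a dataset over a finite set of random variables $V = \{S\} \cup X \cup \{Y\}$, where $S$ is the sensitive variable, $X = \{X_1,\dots,X_n\}$ the non-sensitive features and $Y$ the class (label) variable. The joint distribution $P(V)$ together with a directed acyclic graph $G$ on $V$ forms a Bayesian network (each variable is independent of its non-descendants given its parents) that is faithful (a conditional independence holds in $P$ iff the corresponding d-separation holds in $G$). The Markov blanket $MB_W$ of a variable $W$ is the set of its parents, children, and the other parents of its children in $G$; $MB_Y \subseteq X$ and $MB_S$ denote the Markov blankets of $Y$ and $S$. Intervention $do(W=w)$ means setting $W$ to $w$ in the modified graph obtained from $G$ by deleting all edges into $W$. Classifier training on a feature set $T \subseteq V$ produces a new variable $Y'$ added to the causal graph as a child of all features in $T$, generated by the mechanism $P(Y' \mid T)$ derived from the observational distribution $P$. Causal (interventional) fairness: for a set $K \subseteq V \setminus \{S, Y'\}$, the predictor is $K$-fair if for every value $k$ of $K$ and every outcome $o$, $\Pr(Y'=o \mid do(S=0), do(K=k)) = \Pr(Y'=o \mid do(S=1), do(K=k))$; it is causally fair if it is $K$-fair for every such $K$ (graphically, $S$ is d-separated from $Y'$ given $K$ in the graph where the edges from $S$ into $K$ are removed). A set $T$ is a set of fair causal features if the predictor $Y'$ trained on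 $T$ is causally fair and $T \subseteq MB_Y$ (so its features have an explainable causal relation with $Y$). The fair causal feature selection problem asks for the largest subset $T \subseteq MB_Y$ that is a set of fair causal features. *)

theory Defs
  imports Main
begin

text \<open>Causal graphs are DAGs given by a finite vertex set V and an edge relation E
  (an edge (a,b) means a \<rightarrow> b).\<close>

definition dag :: "'v set \<Rightarrow> ('v \<times> 'v) set \<Rightarrow> bool" where
  "dag V E \<longleftrightarrow> finite V \<and> E \<subseteq> V \<times> V \<and> acyclic E"

definition adj :: "('v \<times> 'v) set \<Rightarrow> 'v \<Rightarrow> 'v \<Rightarrow> bool" where
  "adj E a b \<longleftrightarrow> (a, b) \<in> E \<or> (b, a) \<in> E"

definition is_path :: "('v \<times> 'v) set \<Rightarrow> 'v list \<Rightarrow> bool" where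
  "is_path E p \<longleftrightarrow> length p \<ge> 2 \<and> distinct p \<and>
     (\<forall>i. Suc i < length p \<longrightarrow> adj E (p ! i) (p ! Suc i))"

definition collider :: "('v \<times> 'v) set \<Rightarrow> 'v list \<Rightarrow> nat \<Rightarrow> bool" where
  "collider E p i \<longleftrightarrow> (p ! (i - 1), p ! i) \<in> E \<and> (p ! Suc i, p ! i) \<in> E"

definition active_path :: "('v \<times> 'v) set \<Rightarrow> 'v set \<Rightarrow> 'v list \<Rightarrow> bool" where
  "active_path E Z p \<longleftrightarrow>
     (\<forall>i. 0 < i \<and> Suc i < length p \<longrightarrow>
        (if collider E p i then (\<exists>d. (p ! i, d) \<in> E\<^sup>* \<and> d \<in> Z) else p ! i \<notin> Z))"

definition d_separated :: "('v \<times> 'v) set \<Rightarrow> 'v \<Rightarrow> 'v \<Rightarrow> 'v set \<Rightarrow> bool" where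
  "d_separated E x y Z \<longleftrightarrow>
     \<not> (\<exists>p. is_path E p \<and> hd p = x \<and> last p = y \<and> active_path E Z p)"

definition markov_blanket :: "('v \<times> 'v) set \<Rightarrow> 'v \<Rightarrow> 'v set" where
  "markov_blanket E w =
     {p. (p, w) \<in> E} \<union> {c. (w, c) \<in> E} \<union> {q. q \<noteq> w \<and> (\<exists>c. (w, c) \<in> E \<and> (q, c) \<in> E)}"

text \<open>Graph after training a classifier on T: new vertex Yp (= Y') becomes a child of all of T.\<close>
definition train_edges :: "('v \<times> 'v) set \<Rightarrow> 'v set \<Rightarrow> 'v \<Rightarrow> ('v \<times> 'v) set" where
  "train_edges E T Yp = E \<union> {(t, Yp) | t. t \<in> T}"

definition causally_fair :: "'v set \<Rightarrow> ('v \<times> 'v) set \<Rightarrow> 'v \<Rightarrow> 'v \<Rightarrow> 'v set \<Rightarrow> bool" where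
  "causally_fair V E S Yp T \<longleftrightarrow>
     (\<forall>K. K \<subseteq> (V \<union> {Yp}) - {S, Yp} \<longrightarrow>
        d_separated (train_edges E T Yp - {(S, k) | k. k \<in> K}) S Yp K)"

definition fair_causal_features ::
  "'v set \<Rightarrow> ('v \<times> 'v) set \<Rightarrow> 'v \<Rightarrow> 'v \<Rightarrow> 'v \<Rightarrow> 'v set \<Rightarrow> bool" where
  "fair_causal_features V E S Y Yp T \<longleftrightarrow>
     causally_fair V E S Yp T \<and> T \<subseteq> markov_blanket E Y"

end

theory Submission
  imports Defs
begin

lemma rt_transfer:
  assumes noout: "\<forall>x. (Yp,x) \<notin> G"
    and keep: "\<forall>a b. (a,b)\<in>G \<and> b\<noteq>Yp \<longrightarrow> (a,b)\<in>G1"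
    and "(a,d) \<in> G\<^sup>*" and "d \<noteq> Yp"
  shows "(a,d) \<in> G1\<^sup>*"
  using assms(3,4)
proof (induction rule: converse_rtrancl_induct)
  case base then show ?case by simp
next
  case (step y z)
  have "z \<noteq> Yp"
  proof
    assume "z = Yp"
    with step have "(Yp,d) \<in> G\<^sup>*" "Yp \<noteq> d" by auto
    then obtain w where "(Yp,w) \<in> G" by (metis converse_rtranclE)
    with noout show False by blast
  qed
  with step keep show ?case by (meson converse_rtrancl_into_rtrancl)
qed

lemma transfer:
  assumes sub: "G1 \<subseteq> G" and noout: "\<forall>x. (Yp,x) \<notin> G"
    and keep: "\<forall>a b. (a,b)\<in>G \<and> b\<noteq>Yp \<longrightarrow> (a,b)\<in>G1"
    and pth: "is_path G p" and lst: "last p = Yp"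
    and tl: "(p!(length p - 2), Yp) \<in> G1"
    and act: "active_path G K p" and YK: "Yp \<notin> K"
  shows "is_path G1 p \<and> active_path G1 K p"
proof -
  define n where "n = length p"
  have n2: "n \<ge> 2" and dist: "distinct p" and ad: "\<And>i. Suc i < n \<Longrightarrow> adj G (p!i) (p!Suc i)"
    using pth unfolding is_path_def n_def by auto
  have pl: "p!(n-1) = Yp" using lst n2 unfolding n_def
    by (metis last_conv_nth list.size(3) not_numeral_le_zero)
  have ne: "\<And>j. j < n - 1 \<Longrightarrow> p!j \<noteq> Yp"
  proof
    fix j assume "j < n - 1" "p!j = Yp"
    then have "p!j = p!(n-1)" using pl by simp
    with dist \<open>j < n - 1\<close> n2 show False unfolding n_def
      by (simp add: nth_eq_iff_index_eq)
  qed
  have adj1: "adj G1 (p!i) (p!Suc i)" if "Suc i < n" for i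
  proof (cases "Suc i = n - 1")
    case True
    then have "i = n - 2" by simp
    with True pl tl show ?thesis unfolding adj_def n_def by simp
  next
    case False
    then have "p!i \<noteq> Yp" "p!Suc i \<noteq> Yp" using ne that by auto
    with ad[OF that] keep show ?thesis unfolding adj_def by blast
  qed
  have "is_path G1 p" using pth adj1 unfolding is_path_def n_def by auto
  moreover have "active_path G1 K p"
    unfolding active_path_def
  proof (intro allI impI)
    fix i assume i: "0 < i \<and> Suc i < length p"
    then have "i < n - 1" unfolding n_def by auto
    then have pi: "p!i \<noteq> Yp" using ne by blast
    have col: "collider G1 p i = collider G p i"
      using sub keep pi unfolding collider_def by blast
    have A: "if collider G p i then (\<exists>d. (p ! i, d) \<in> G\<^sup>* \<and> d \<in> K) else p ! i \<notin> K"
      using act i unfolding active_path_def by blast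
    show "if collider G1 p i then (\<exists>d. (p ! i, d) \<in> G1\<^sup>* \<and> d \<in> K) else p ! i \<notin> K"
    proof (cases "collider G p i")
      case True
      then obtain d where "(p ! i, d) \<in> G\<^sup>*" "d \<in> K" using A by auto
      moreover then have "d \<noteq> Yp" using YK by auto
      ultimately have "(p ! i, d) \<in> G1\<^sup>*" using rt_transfer[OF noout keep] by blast
      with \<open>d \<in> K\<close> True col show ?thesis by auto
    next
      case False
      then show ?thesis using A col by auto
    qed
  qed
  ultimately show ?thesis by blast
qed

theorem lemma1:
  fixes V :: "'v set" and E :: "('v \<times> 'v) set" and S Y Yp :: 'v and D1 D2 :: "'v set"
  assumes "dag V E"
    and "S \<in> V" and "Y \<in> V" and "S \<noteq> Y"
    and "Yp \<notin> V"
    and "markov_blanket E Y \<subseteq> V - {S, Y}"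
    and "D1 \<noteq> D2"
    and "fair_causal_features V E S Y Yp D1"
    and "fair_causal_features V E S Y Yp D2"
  shows "causally_fair V E S Yp (D1 \<union> D2)"
proof -
  have EV: "E \<subseteq> V \<times> V" using assms(1) unfolding dag_def by blast
  have D1V: "D1 \<subseteq> V" using assms(6,8) unfolding fair_causal_features_def by blast
  have D2V: "D2 \<subseteq> V" using assms(6,9) unfolding fair_causal_features_def by blast
  have cf1: "causally_fair V E S Yp D1" using assms(8) unfolding fair_causal_features_def by blast
  have cf2: "causally_fair V E S Yp D2" using assms(9) unfolding fair_causal_features_def by blast
  show ?thesis unfolding causally_fair_def d_separated_def
  proof (intro allI impI notI)
  fix K assume K: "K \<subseteq> (V \<union> {Yp}) - {S, Yp}"
  define G where "G = train_edges E (D1 \<union> D2) Yp - {(S, k) |k. k \<in> K}"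
  assume "\<exists>p. is_path (train_edges E (D1 \<union> D2) Yp - {(S, k) |k. k \<in> K}) p \<and> hd p = S \<and> last p = Yp \<and>
           active_path (train_edges E (D1 \<union> D2) Yp - {(S, k) |k. k \<in> K}) K p"
  then obtain p where pth: "is_path G p"
    and hd: "hd p = S" and lst: "last p = Yp"
    and act: "active_path G K p" unfolding G_def by blast
  have YK: "Yp \<notin> K" using K by blast
  have noout: "\<forall>x. (Yp,x) \<notin> G"
  proof
    fix x show "(Yp,x) \<notin> G"
    proof
      assume "(Yp,x) \<in> G"
      then have "(Yp,x) \<in> E \<or> Yp \<in> D1 \<union> D2" unfolding G_def train_edges_def by blast
      then show False using EV D1V D2V assms(5) by blast
    qed
  qed
  define t where "t = p!(length p - 2)"
  have n2: "length p \<ge> 2" using pth unfolding is_path_def by blast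
  have pl: "p!(length p - 1) = Yp" using lst n2
    by (metis last_conv_nth list.size(3) not_numeral_le_zero)
  have a1: "Suc (length p - 2) < length p" "Suc (length p - 2) = length p - 1" using n2 by auto
  have "adj G t Yp" using pth a1 pl unfolding is_path_def t_def by metis
  then have tG: "(t, Yp) \<in> G" using noout unfolding adj_def by blast
  then have "(t, Yp) \<in> E \<or> t \<in> D1 \<union> D2" unfolding G_def train_edges_def by blast
  then have tD: "t \<in> D1 \<union> D2" using EV assms(5) by blast
  have main: "False" if DD: "D = D1 \<or> D = D2" and tD': "t \<in> D" and cf: "causally_fair V E S Yp D" for D
  proof -
    define G1 where "G1 = train_edges E D Yp - {(S, k) |k. k \<in> K}"
    have sub: "G1 \<subseteq> G" using DD unfolding G1_def G_def train_edges_def by blast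
    have keep: "\<forall>a b. (a,b)\<in>G \<and> b\<noteq>Yp \<longrightarrow> (a,b)\<in>G1"
      unfolding G1_def G_def train_edges_def by blast
    have t1: "(t, Yp) \<in> G1" using tD' tG unfolding G1_def G_def train_edges_def by blast
    have "is_path G1 p \<and> active_path G1 K p"
      using transfer[OF sub noout keep pth lst t1[unfolded t_def] act YK] .
    moreover have "d_separated G1 S Yp K" using cf K unfolding causally_fair_def G1_def by blast
    ultimately show False using hd lst unfolding d_separated_def by blast
  qed
  from tD show False using main cf1 cf2 by blast
  qed
qed

end
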